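(* Let $q$ be a prime power and $n$ a positive integer with $\gcd(q,n)=1$. Iso-self-dual cyclic codes over $\mathbb{F}_q$ of length $n$ exist if and only if $0<\nu_2(n)<2\,\nu_2(q-1)$.
   Context: $R_n=\mathbb{F}_q[X]/\langle X^n-1\rangle$; each element is identified with its unique representative $a_0+a_1X+\dots+a_{n-1}X^{n-1}$ and with the word $(a_0,\dots,a_{n-1})\in\mathbb{F}_q^n$. A cyclic code of length $n$ is an ideal of $R_n$; $C^\perp$ is the Euclidean dual of $C$ in $\mathbb{F}_q^n$. Fix a primitive $n$-th root of unity $\theta$ in an extension field of $\mathbb{F}_q$. For $s\in\mathbb{Z}_n^*$ (unit group of $\mathbb{Z}/n\mathbb{Z}$) and $t\in\mathbb{Z}_n$ with $qt\equiv t\pmod n$ (so $\theta^t\in\mathbb{F}_q$), let $\varphi_{s,t}:R_n\to R_n$, $a(X)\mapsto a(\theta^{-t}X^{s^{-1}})\bmod (X^n-1)$, where $s^{-1}$ is a positive integer with $ss^{-1}\equiv1\pmod n$. A cyclic code $C\subseteq R_n$ is iso-self-dual if there exist such $s,t$ with $\varphi_{s,t}(C)=C^\perp$. For a nonzero integer $m$, $\nu_2(m)$ is the exponent of the largest power of $2$ dividing $m$; $\nu_2(0)=\infty$. *)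

theory Defs
  imports "HOL-Computational_Algebra.Computational_Algebra" "HOL-Number_Theory.Cong"
begin

definition xn1 :: "nat \<Rightarrow> 'a::field poly" where
  "xn1 n = monom 1 n - 1"

text \<open>Elements of R_n, identified with their unique representatives of degree < n.\<close>
definition Rn :: "nat \<Rightarrow> 'a::field poly set" where
  "Rn n = {p. p = 0 \<or> degree p < n}"

text \<open>A cyclic code of length n: an ideal of R_n (as a set of representatives).\<close>
definition cyclic_code :: "nat \<Rightarrow> 'a::field poly set \<Rightarrow> bool" where
  "cyclic_code n C \<longleftrightarrow> C \<subseteq> Rn n \<and> 0 \<in> C \<and>
     (\<forall>a\<in>C. \<forall>b\<in>C. a + b \<in> C) \<and>
     (\<forall>a\<in>C. \<forall>r. (r * a) mod xn1 n \<in> C)"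

text \<open>Euclidean dual in F_q^n, a word (a_0,...,a_{n-1}) being the coefficient vector.\<close>
definition dual_code :: "nat \<Rightarrow> 'a::field poly set \<Rightarrow> 'a poly set" where
  "dual_code n C = {b \<in> Rn n. \<forall>a\<in>C. (\<Sum>i<n. coeff a i * coeff b i) = 0}"

text \<open>phi_{s,t}(a) = a(theta^{-t} X^{s'}) mod (X^n - 1), where s' is a positive inverse of s
  mod n and theta^{-t} is the element of F_q whose image under the field embedding emb
  is inverse (theta^t).\<close>
definition phi :: "('a::field \<Rightarrow> 'b::field) \<Rightarrow> 'b \<Rightarrow> nat \<Rightarrow> nat \<Rightarrow> nat \<Rightarrow> 'a poly \<Rightarrow> 'a poly" where
  "phi emb \<theta> n s' t a =
     pcompose a (monom (THE c. emb c = inverse (\<theta> ^ t)) s') mod xn1 n"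

definition iso_self_dual ::
  "('a::{finite,field} \<Rightarrow> 'b::field) \<Rightarrow> 'b \<Rightarrow> nat \<Rightarrow> 'a poly set \<Rightarrow> bool" where
  "iso_self_dual emb \<theta> n C \<longleftrightarrow>
     (\<exists>s s' t. s < n \<and> coprime s n \<and> s' > 0 \<and> [s * s' = 1] (mod n) \<and>
        t < n \<and> [card (UNIV :: 'a set) * t = t] (mod n) \<and>
        phi emb \<theta> n s' t ` C = dual_code n C)"

definition prim_root :: "nat \<Rightarrow> 'b::field \<Rightarrow> bool" where
  "prim_root n \<theta> \<longleftrightarrow> \<theta> ^ n = 1 \<and> (\<forall>k. 0 < k \<and> k < n \<longrightarrow> \<theta> ^ k \<noteq> 1)"

definition field_embedding :: "('a::field \<Rightarrow> 'b::field) \<Rightarrow> bool" where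
  "field_embedding emb \<longleftrightarrow> inj emb \<and> emb 0 = 0 \<and> emb 1 = 1 \<and>
     (\<forall>x y. emb (x + y) = emb x + emb y) \<and> (\<forall>x y. emb (x * y) = emb x * emb y)"

end

theory Submission
  imports Defs
begin

lemma ff_pow_card:
  fixes x :: "'a::{finite,field}"
  shows "x ^ card (UNIV :: 'a set) = x"
proof (cases "x = 0")
  case False
  have "x * (\<Prod>y\<in>UNIV-{0}. x * y) = x * x ^ (card (UNIV :: 'a set) - 1) * \<Prod>(UNIV-{0})"
    by (simp add: prod.distrib mult_ac)
  also have "x * x ^ (card (UNIV :: 'a set) - 1) = x ^ Suc (card (UNIV :: 'a set) - 1)"
    by (subst power_Suc) auto
  also have "Suc (card (UNIV :: 'a set) - 1) = card (UNIV :: 'a set)"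
    using finite_UNIV_card_ge_0[where ?'a = 'a] by simp
  also have "(\<Prod>y\<in>UNIV-{0}. x * y) = (\<Prod>y\<in>UNIV-{0}. y)"
    by (rule prod.reindex_bij_witness[of _ "\<lambda>y. y / x" "\<lambda>y. x * y"]) (use False in auto)
  finally show ?thesis
    by simp
qed (use finite_UNIV_card_ge_0[where ?'a = 'a] in auto)

lemma ff_prime_CHAR: "prime CHAR('a::{finite,field})"
  by (rule prime_CHAR_semidom) (rule finite_imp_CHAR_pos, simp)

definition addsub :: "'a::field set \<Rightarrow> bool" where
  "addsub S \<longleftrightarrow> 0 \<in> S \<and> (\<forall>x\<in>S. \<forall>y\<in>S. x + y \<in> S)"

lemma addsub_ofnat: "addsub S \<Longrightarrow> x \<in> S \<Longrightarrow> of_nat i * x \<in> S"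
  by (induction i) (auto simp: addsub_def algebra_simps)

lemma addsub_minus:
  fixes S :: "'a::{finite,field} set"
  assumes "addsub S" "x \<in> S" shows "-x \<in> S"
proof -
  have p: "CHAR('a) > 0" by (rule finite_imp_CHAR_pos) simp
  have "of_nat (CHAR('a) - 1) * x + x = of_nat CHAR('a) * x"
    using p by (simp add: algebra_simps of_nat_diff)
  also have "\<dots> = 0" by simp
  finally have "x + of_nat (CHAR('a) - 1) * x = 0" by (simp add: add.commute)
  hence "-x = of_nat (CHAR('a) - 1) * x" by (rule add.inverse_unique)
  thus ?thesis using addsub_ofnat[OF assms] by simp
qed

lemma addsub_step:
  fixes S :: "'a::{finite,field} set"
  assumes S: "addsub S" and y: "y \<notin> S"
  defines "S' \<equiv> (\<lambda>(s,i). s + of_nat i * y) ` (S \<times> {..<CHAR('a)})"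
  shows "addsub S'" "S \<subseteq> S'" "y \<in> S'" "card S' = card S * CHAR('a)"
proof -
  let ?p = "CHAR('a)"
  have pp: "prime ?p" by (rule ff_prime_CHAR)
  hence p1: "?p > 1" using prime_gt_1_nat by blast
  show "S \<subseteq> S'" unfolding S'_def
  proof
    fix s assume "s \<in> S" thus "s \<in> (\<lambda>(s,i). s + of_nat i * y) ` (S \<times> {..<?p})"
      using p1 by (intro image_eqI[of _ _ "(s,0)"]) auto
  qed
  show "y \<in> S'" unfolding S'_def
    using p1 S by (intro image_eqI[of _ _ "(0,1)"]) (auto simp: addsub_def)
  show "addsub S'" unfolding addsub_def
  proof safe
    show "0 \<in> S'" unfolding S'_def using p1 S by (intro image_eqI[of _ _ "(0,0)"]) (auto simp: addsub_def)
  next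
    fix x1 x2 assume "x1 \<in> S'" "x2 \<in> S'"
    then obtain s1 i1 s2 i2 where a: "s1 \<in> S" "s2 \<in> S" "x1 = s1 + of_nat i1 * y" "x2 = s2 + of_nat i2 * y"
      unfolding S'_def by auto
    have e: "(of_nat (i1 + i2) :: 'a) = of_nat ((i1 + i2) mod ?p)"
      by (simp only: of_nat_eq_iff_cong_CHAR) (simp add: cong_def)
    have "x1 + x2 = (s1 + s2) + of_nat ((i1 + i2) mod ?p) * y"
      using a e by (simp add: algebra_simps flip: e)
    moreover have "s1 + s2 \<in> S" using a S by (auto simp: addsub_def)
    moreover have "(i1 + i2) mod ?p < ?p" using p1 by simp
    ultimately show "x1 + x2 \<in> S'" unfolding S'_def by (auto intro!: image_eqI[of _ _ "(s1+s2, (i1+i2) mod ?p)"])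
  qed
  have inj: "inj_on (\<lambda>(s,i). s + of_nat i * y) (S \<times> {..<?p})"
  proof (rule inj_onI, clarify)
    fix s i s' i' assume as: "s \<in> S" "i < ?p" "s' \<in> S" "i' < ?p" "s + of_nat i * y = s' + of_nat i' * y"
    have main: "i = i'" if "s \<in> S" "i < ?p" "s' \<in> S" "i' < ?p" "s + of_nat i * y = s' + of_nat i' * y" "i' < i" for s i s' i'
    proof -
      have "of_nat (i - i') * y = s' - s" using that by (simp add: of_nat_diff algebra_simps)
      have ms: "-s \<in> S" using addsub_minus[OF S] that(1) by blast
      have "s' + (-s) \<in> S" using S ms that(3) unfolding addsub_def by blast
      hence d: "of_nat (i - i') * y \<in> S" using \<open>of_nat (i - i') * y = s' - s\<close> by simp
      have "0 < i - i'" "i - i' < ?p" using that by auto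
      hence "\<not> ?p dvd (i - i')" by (auto dest: dvd_imp_le)
      hence "coprime ?p (i - i')" using pp by (simp add: prime_imp_coprime)
      hence "coprime (i - i') ?p" by (simp add: coprime_commute)
      then obtain e where e: "[(i - i') * e = 1] (mod ?p)"
        using cong_solve_coprime_nat by auto
      have "of_nat e * (of_nat (i - i') * y) \<in> S" by (rule addsub_ofnat[OF S d])
      also have "of_nat e * (of_nat (i - i') * y) = of_nat ((i - i') * e) * y" by (simp add: mult_ac)
      also have "(of_nat ((i - i') * e) :: 'a) = of_nat 1" using e by (simp only: of_nat_eq_iff_cong_CHAR)
      finally have "y \<in> S" by simp
      with y show ?thesis by simp
    qed
    show "s = s' \<and> i = i'"
    proof -
      have "i = i'"
        using main[of s i s' i'] main[of s' i' s i] as by (metis linorder_neqE_nat)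
      thus ?thesis using as by simp
    qed
  qed
  show "card S' = card S * ?p" unfolding S'_def
    by (subst card_image[OF inj]) (simp add: card_cartesian_product)
qed

lemma card_ff_aux:
  fixes S :: "'a::{finite,field} set"
  shows "addsub S \<Longrightarrow> card S = CHAR('a) ^ k \<Longrightarrow> \<exists>k'. card (UNIV :: 'a set) = CHAR('a) ^ k'"
  proof (induction "card (UNIV - S::'a set)" arbitrary: S k rule: less_induct)
    case (less S k)
    show ?case
    proof (cases "S = UNIV")
      case True thus ?thesis using less by auto
    next
      case False
      then obtain y where y: "y \<notin> S" by auto
      define S' where "S' = (\<lambda>(s,i). s + of_nat i * y) ` (S \<times> {..<CHAR('a)})"
      note st = addsub_step[OF less(2) y, folded S'_def]
      have "card (UNIV - S') < card (UNIV - S)"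
        using st(2,3) y by (intro psubset_card_mono) auto
      thus ?thesis using less(1)[of S' "Suc k"] st less(3) by (simp add: mult_ac)
    qed
  qed

lemma card_ff_prime_power: "\<exists>k. card (UNIV :: 'a::{finite,field} set) = CHAR('a) ^ k"
  by (rule card_ff_aux[of "{0}" 0]) (auto simp: addsub_def)

locale iso =
  fixes emb :: "'a::{finite,field} \<Rightarrow> 'b::field" and th :: 'b and n :: nat
  assumes n_pos: "n > 0" and cop: "coprime (card (UNIV::'a set)) n"
    and emb: "field_embedding emb" and prim: "prim_root n th"
begin


lemma emb_add[simp]: "emb (x + y) = emb x + emb y" using emb by (simp add: field_embedding_def)
lemma emb_mult[simp]: "emb (x * y) = emb x * emb y" using emb by (simp add: field_embedding_def)
lemma emb_0[simp]: "emb 0 = 0" using emb by (simp add: field_embedding_def)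
lemma emb_1[simp]: "emb 1 = 1" using emb by (simp add: field_embedding_def)
lemma emb_inj: "inj emb" using emb by (simp add: field_embedding_def)
lemma emb_eq_iff[simp]: "emb x = emb y \<longleftrightarrow> x = y" using emb_inj by (auto dest: injD)
lemma emb_eq_0_iff[simp]: "emb x = 0 \<longleftrightarrow> x = 0" using emb_eq_iff[of x 0] by simp
lemma emb_sum: "emb (sum f A) = (\<Sum>i\<in>A. emb (f i))"
  by (induction A rule: infinite_finite_induct) auto
lemma emb_pow[simp]: "emb (x ^ k) = emb x ^ k" by (induction k) auto
lemma emb_of_nat[simp]: "emb (of_nat k) = of_nat k" by (induction k) auto
lemma emb_minus[simp]: "emb (- x) = - emb x"
proof -
  have "emb x + emb (-x) = 0" using emb_add[of x "-x"] by simp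
  thus ?thesis by (metis add.inverse_unique)
qed
lemma emb_diff[simp]: "emb (x - y) = emb x - emb y"
  using emb_add[of x "-y"] by simp

lemma CHAR_b: "CHAR('b) = CHAR('a)"
proof (rule CHAR_eqI)
  show "of_nat CHAR('a) = (0::'b)" using emb_of_nat[of "CHAR('a)"] by simp
  fix x assume "of_nat x = (0::'b)"
  hence "emb (of_nat x) = emb 0" by simp
  hence "of_nat x = (0::'a)" by (simp only: emb_eq_iff)
  thus "CHAR('a) dvd x" by (simp add: of_nat_eq_0_iff_char_dvd)
qed

lemma frob_sum: "(sum f A :: 'b) ^ card (UNIV :: 'a set) = (\<Sum>i\<in>A. f i ^ card (UNIV :: 'a set))"
proof -
  obtain k where k: "card (UNIV :: 'a set) = CHAR('a) ^ k" using card_ff_prime_power by blast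
  show ?thesis
    by (rule freshmans_dream_sum') (use ff_prime_CHAR[where 'a='a] k CHAR_b in auto)
qed

lemma emb_pow_q[simp]: "emb x ^ card (UNIV :: 'a set) = emb x"
  using ff_pow_card[of x] emb_pow[of x "card (UNIV :: 'a set)"] by simp

lemma q_ge2: "card (UNIV :: 'a set) \<ge> 2"
proof -
  have "{0::'a, 1} \<subseteq> UNIV" by simp
  hence "card {0::'a,1} \<le> card (UNIV :: 'a set)" by (intro card_mono) auto
  thus ?thesis by simp
qed

lemma fixed_in_range:
  assumes "y ^ card (UNIV :: 'a set) = y" shows "\<exists>c. emb c = y"
proof -
  define P :: "'b poly" where "P = monom 1 (card (UNIV :: 'a set)) - [:0,1:]"
  have dP: "degree P = card (UNIV :: 'a set)" using q_ge2 unfolding P_def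
    by (simp only: diff_conv_add_uminus, subst degree_add_eq_left) (auto simp: degree_monom_eq)
  hence P0: "P \<noteq> 0" using q_ge2 by auto
  have rt: "poly P x = 0 \<longleftrightarrow> x ^ card (UNIV :: 'a set) = x" for x
    by (simp add: P_def poly_monom)
  have sub: "range emb \<subseteq> {x. poly P x = 0}" by (auto simp: rt)
  have fin: "finite {x. poly P x = 0}" by (rule poly_roots_finite[OF P0])
  have "card {x. poly P x = 0} \<le> card (UNIV :: 'a set)" using card_poly_roots_bound[OF P0] dP by simp
  moreover have "card (range emb) = card (UNIV :: 'a set)" using card_image[OF inj_on_subset[OF emb_inj]] by simp
  ultimately have "range emb = {x. poly P x = 0}"
    using card_subset_eq[OF fin sub] card_mono[OF fin sub] by simp
  hence "y \<in> range emb" using assms rt by auto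
  thus ?thesis by auto
qed

lemma n_nz: "(of_nat n :: 'b) \<noteq> 0"
proof
  assume "(of_nat n :: 'b) = 0"
  hence "CHAR('b) dvd n" by (simp add: of_nat_eq_0_iff_char_dvd)
  hence d1: "CHAR('a) dvd n" using CHAR_b by simp
  obtain k where k: "card (UNIV :: 'a set) = CHAR('a) ^ k" using card_ff_prime_power by blast
  have "k \<noteq> 0" using k q_ge2 by (cases k) auto
  hence d2: "CHAR('a) dvd card (UNIV :: 'a set)" using k by simp
  have "is_unit (CHAR('a))" using cop d1 d2 by (meson coprime_common_divisor)
  hence "CHAR('a) dvd 1" by simp
  thus False using ff_prime_CHAR[where 'a='a] by auto
qed

lemma th_n[simp]: "th ^ n = 1" using prim by (simp add: prim_root_def)
lemma th_nz[simp]: "th \<noteq> 0" using th_n n_pos by (metis power_0_left less_not_refl2 zero_neq_one)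

lemma th_mod: "th ^ k = th ^ (k mod n)"
proof -
  have "th ^ k = th ^ (n * (k div n) + k mod n)" by (simp only: mult_div_mod_eq)
  also have "\<dots> = th ^ (k mod n)" by (simp only: power_add power_mult th_n power_one mult_1)
  finally show ?thesis .
qed

lemma th_cong: "[a = b] (mod n) \<Longrightarrow> th ^ a = th ^ b"
  by (metis cong_def th_mod)

lemma th_one_iff: "th ^ k = 1 \<longleftrightarrow> n dvd k"
proof
  assume "th ^ k = 1"
  hence "th ^ (k mod n) = 1" using th_mod by simp
  moreover have "k mod n < n" using n_pos by simp
  ultimately have "k mod n = 0" using prim unfolding prim_root_def by (metis neq0_conv)
  thus "n dvd k" by auto
next
  assume "n dvd k" hence "k mod n = 0" by simp
  thus "th ^ k = 1" using th_mod[of k] by simp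
qed

lemma orth: "(\<Sum>l<n. th ^ (l * d)) = (if n dvd d then of_nat n else 0)"
proof (cases "n dvd d")
  case True
  hence "th ^ (l * d) = 1" for l by (simp add: th_one_iff)
  thus ?thesis using True by simp
next
  case False
  define x where "x = th ^ d"
  have x1: "x \<noteq> 1" using False th_one_iff x_def by simp
  have xn: "x ^ n = 1" unfolding x_def by (simp flip: power_mult add: mult.commute[of d n] power_mult)
  have "th ^ (l * d) = x ^ l" for l unfolding x_def by (simp add: power_mult[symmetric] mult.commute)
  hence "(\<Sum>l<n. th ^ (l * d)) = (\<Sum>l<n. x ^ l)" by simp
  also have "\<dots> = 0" using x1 xn by (simp add: sum_gp_strict)
  finally show ?thesis using False by simp
qed

lemma dft_inv:
  assumes "k0 < n"
  shows "(\<Sum>l<n. th ^ (l * (n - k0)) * (\<Sum>k<n. th ^ (l * k) * v k)) = of_nat n * v k0"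
proof -
  have "(\<Sum>l<n. th ^ (l * (n - k0)) * (\<Sum>k<n. th ^ (l * k) * v k))
      = (\<Sum>l<n. \<Sum>k<n. v k * th ^ (l * (n - k0 + k)))"
    by (simp add: sum_distrib_left distrib_left power_add mult_ac)
  also have "\<dots> = (\<Sum>k<n. \<Sum>l<n. v k * th ^ (l * (n - k0 + k)))" by (rule sum.swap)
  also have "\<dots> = (\<Sum>k<n. v k * (\<Sum>l<n. th ^ (l * (n - k0 + k))))" by (simp add: sum_distrib_left)
  also have "\<dots> = (\<Sum>k<n. if k = k0 then v k * of_nat n else 0)"
  proof (rule sum.cong[OF refl])
    fix k assume k: "k \<in> {..<n}"
    have "n dvd (n - k0 + k) \<longleftrightarrow> k = k0"
    proof
      assume d: "n dvd (n - k0 + k)"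
      have "0 < n - k0 + k" "n - k0 + k < 2 * n" using assms k by auto
      then obtain c where c: "n - k0 + k = n * c" using d by auto
      have "c = 1"
      proof -
        have "0 < c" using c \<open>0 < n - k0 + k\<close> by (cases c) auto
        moreover have "c < 2" using c \<open>n - k0 + k < 2 * n\<close> by (metis mult.commute mult_less_cancel2)
        ultimately show ?thesis by simp
      qed
      thus "k = k0" using c assms k by simp
    qed (use assms in auto)
    thus "v k * (\<Sum>l<n. th ^ (l * (n - k0 + k))) = (if k = k0 then v k * of_nat n else 0)"
      by (simp add: orth)
  qed
  also have "\<dots> = of_nat n * v k0" using assms by (simp add: mult.commute)
  finally show ?thesis .
qed

lemma dft_uniq:
  assumes "\<forall>l<n. (\<Sum>k<n. th ^ (l * k) * v k) = 0" "k0 < n"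
  shows "v k0 = 0"
proof -
  have "of_nat n * v k0 = 0" using dft_inv[OF assms(2), of v] assms(1) by simp
  thus ?thesis using n_nz by simp
qed

end

context iso begin

definition ev :: "'a poly \<Rightarrow> 'b \<Rightarrow> 'b" where "ev p x = poly (map_poly emb p) x"

lemma map_add: "map_poly emb (p + r) = map_poly emb p + map_poly emb r"
  by (rule poly_eqI) (simp add: coeff_map_poly)
lemma map_diff: "map_poly emb (p - r) = map_poly emb p - map_poly emb r"
  by (rule poly_eqI) (simp add: coeff_map_poly)

lemma ev_0[simp]: "ev 0 x = 0" by (simp add: ev_def)
lemma ev_pCons: "ev (pCons c p) x = emb c + x * ev p x"
  by (simp add: ev_def map_poly_pCons)
lemma ev_add: "ev (p + r) x = ev p x + ev r x" by (simp add: ev_def map_add)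
lemma ev_diff: "ev (p - r) x = ev p x - ev r x" by (simp add: ev_def map_diff)
lemma ev_smult: "ev (smult c p) x = emb c * ev p x"
  by (simp add: ev_def map_poly_smult)
lemma ev_mult: "ev (p * r) x = ev p x * ev r x"
proof (induction p)
  case 0 thus ?case by simp
next
  case (pCons a p)
  have "ev (pCons a p * r) x = ev (smult a r + pCons 0 (p * r)) x" by simp
  also have "\<dots> = emb a * ev r x + x * (ev p x * ev r x)"
    by (simp only: ev_add ev_smult ev_pCons pCons.IH) simp
  also have "\<dots> = ev (pCons a p) x * ev r x" by (simp add: ev_pCons algebra_simps)
  finally show ?case .
qed
lemma ev_monom: "ev (monom c k) x = emb c * x ^ k"
  by (simp add: ev_def map_poly_monom poly_monom)
lemma ev_const: "ev [:c:] x = emb c" by (simp add: ev_def map_poly_pCons)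
lemma ev_1: "ev 1 x = 1" by (simp add: ev_def)
lemma ev_pcompose: "ev (pcompose p r) x = ev p (ev r x)"
proof (induction p)
  case 0 thus ?case by simp
next
  case (pCons a p)
  show ?case by (simp add: pcompose_pCons ev_add ev_const ev_mult pCons.IH ev_pCons)
qed

lemma poly_sum_form:
  fixes r :: "'c::comm_semiring_1 poly"
  assumes "degree r < N" shows "poly r x = (\<Sum>i<N. coeff r i * x ^ i)"
proof -
  have "poly r x = (\<Sum>i\<le>degree r. coeff r i * x ^ i)" by (rule poly_altdef)
  also have "\<dots> = (\<Sum>i<N. coeff r i * x ^ i)"
    using assms by (intro sum.mono_neutral_left) (auto simp: coeff_eq_0)
  finally show ?thesis .
qed

lemma ev_sum_form:
  assumes "degree p < N" shows "ev p x = (\<Sum>i<N. emb (coeff p i) * x ^ i)"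
proof -
  have "degree (map_poly emb p) < N" using map_poly_degree_leq[of emb p] assms by linarith
  thus ?thesis unfolding ev_def by (simp add: poly_sum_form coeff_map_poly)
qed

lemma ev_frob: "ev p x ^ card (UNIV :: 'a set) = ev p (x ^ card (UNIV :: 'a set))"
proof -
  have "ev p x ^ card (UNIV :: 'a set) = (\<Sum>i<Suc (degree p). (emb (coeff p i) * x ^ i) ^ card (UNIV :: 'a set))"
    by (subst ev_sum_form[of p "Suc (degree p)"], simp, rule frob_sum)
  also have "\<dots> = (\<Sum>i<Suc (degree p). emb (coeff p i) * (x ^ card (UNIV :: 'a set)) ^ i)"
    by (simp add: power_mult_distrib flip: power_mult add: mult.commute)
  also have "\<dots> = ev p (x ^ card (UNIV :: 'a set))" by (simp add: ev_sum_form[of p "Suc (degree p)"])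
  finally show ?thesis .
qed

definition E :: "'a poly \<Rightarrow> nat \<Rightarrow> 'b" where "E p j = ev p (th ^ j)"

lemma E_mod: "E p j = E p (j mod n)" unfolding E_def using th_mod by metis
lemma E_cong: "[j = j'] (mod n) \<Longrightarrow> E p j = E p j'" unfolding E_def using th_cong by metis

lemma xn1_deg: "degree (xn1 n :: 'a poly) = n"
  unfolding xn1_def using n_pos
  by (simp only: diff_conv_add_uminus, subst degree_add_eq_left) (auto simp: degree_monom_eq)
lemma xn1_nz: "(xn1 n :: 'a poly) \<noteq> 0" using xn1_deg n_pos by auto
lemma E_xn1: "E (xn1 n) j = 0"
proof -
  have "(th ^ j) ^ n = 1" by (simp flip: power_mult add: mult.commute[of j n] power_mult)
  thus ?thesis by (simp add: E_def xn1_def ev_diff ev_monom ev_1)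
qed
lemma E_modx: "E (p mod xn1 n) j = E p j"
proof -
  have "p = p div xn1 n * xn1 n + p mod xn1 n" by simp
  hence "E p j = E (p div xn1 n) j * E (xn1 n) j + E (p mod xn1 n) j"
    unfolding E_def by (metis ev_add ev_mult)
  thus ?thesis by (simp add: E_xn1)
qed
lemma E_add: "E (p + r) j = E p j + E r j" by (simp add: E_def ev_add)
lemma E_mult: "E (p * r) j = E p j * E r j" by (simp add: E_def ev_mult)
lemma E_smult: "E (smult c p) j = emb c * E p j" by (simp add: E_def ev_smult)

lemma Rn_deg: "(p::'a poly) \<in> Rn n \<Longrightarrow> degree p < n" using n_pos by (auto simp: Rn_def)
lemma Rn_mod: "(p::'a poly) mod xn1 n \<in> Rn n"
  using degree_mod_less[OF xn1_nz, of p] xn1_deg by (auto simp: Rn_def)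

lemma E_sum: "(p::'a poly) \<in> Rn n \<Longrightarrow> E p j = (\<Sum>i<n. emb (coeff p i) * th ^ (i * j))"
  unfolding E_def by (simp add: ev_sum_form[OF Rn_deg] power_mult[symmetric] mult.commute)

lemma poly_uniq:
  assumes p: "p \<in> Rn n" and z: "\<forall>j<n. E p j = 0" shows "p = 0"
proof (rule poly_eqI)
  fix k
  show "coeff p k = coeff 0 k"
  proof (cases "k < n")
    case True
    have "\<forall>l<n. (\<Sum>i<n. th ^ (l * i) * emb (coeff p i)) = 0"
      using z E_sum[OF p] by (simp add: mult_ac)
    hence "emb (coeff p k) = 0" using dft_uniq[of "\<lambda>i. emb (coeff p i)" k] True by blast
    thus ?thesis by simp
  next
    case False thus ?thesis using Rn_deg[OF p] by (simp add: coeff_eq_0)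
  qed
qed

lemma E_shift: "E ((monom 1 l * p) mod xn1 n) j = th ^ (l * j) * E p j"
proof -
  have "E (monom 1 l) j = th ^ (l * j)"
    by (simp add: E_def ev_monom power_mult[symmetric] mult.commute)
  thus ?thesis by (simp only: E_modx E_mult)
qed

lemma orth2:
  assumes "i < n" "i' < n"
  shows "(\<Sum>k<n. th ^ (i * k + i' * (n - k))) = (if i = i' then of_nat n else 0)"
proof -
  have c: "[i * k + i' * (n - k) = k * (n + i - i')] (mod n)" if k: "k < n" for k
  proof -
    have "[i * k + i' * (n - k) + i' * k = k * (n + i - i') + i' * k] (mod n)"
    proof -
      have "i' * (n - k) + i' * k = i' * (n - k + k)" by (simp only: add_mult_distrib2)
      hence e1: "i * k + i' * (n - k) + i' * k = i * k + n * i'" using k by simp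
      have "k * (n + i - i') + k * i' = k * (n + i - i' + i')" by (simp only: add_mult_distrib2)
      hence e2: "k * (n + i - i') + i' * k = i * k + n * k" using assms by (simp add: algebra_simps)
      show ?thesis unfolding e1 e2 cong_def by simp
    qed
    thus ?thesis by (simp add: cong_add_rcancel_nat)
  qed
  have "(\<Sum>k<n. th ^ (i * k + i' * (n - k))) = (\<Sum>k<n. th ^ (k * (n + i - i')))"
    using c th_cong by (intro sum.cong) auto
  also have "\<dots> = (if n dvd (n + i - i') then of_nat n else 0)" by (rule orth)
  also have "n dvd (n + i - i') \<longleftrightarrow> i = i'"
  proof
    assume d: "n dvd (n + i - i')"
    have "0 < n + i - i'" "n + i - i' < 2 * n" using assms by auto
    then obtain c where c: "n + i - i' = n * c" using d by auto
    have "c = 1"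
    proof -
      have "0 < c" using c \<open>0 < n + i - i'\<close> by (cases c) auto
      moreover have "c < 2" using c \<open>n + i - i' < 2 * n\<close> by (metis mult.commute mult_less_cancel2)
      ultimately show ?thesis by simp
    qed
    thus "i = i'" using c assms by simp
  qed (use assms in auto)
  finally show ?thesis .
qed

lemma parseval:
  assumes a: "a \<in> Rn n" and b: "b \<in> Rn n"
  shows "of_nat n * emb (\<Sum>i<n. coeff a i * coeff b i) = (\<Sum>k<n. E a k * E b (n - k))"
proof -
  have "(\<Sum>k<n. E a k * E b (n - k))
     = (\<Sum>k<n. \<Sum>i<n. \<Sum>i'<n. emb (coeff a i) * emb (coeff b i') * th ^ (i * k + i' * (n - k)))"
  proof (rule sum.cong[OF refl])
    fix k
    have "E a k * E b (n - k) = (\<Sum>i<n. \<Sum>i'<n. (emb (coeff a i) * th ^ (i * k)) * (emb (coeff b i') * th ^ (i' * (n - k))))"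
      by (simp only: E_sum[OF a] E_sum[OF b] sum_product)
    also have "\<dots> = (\<Sum>i<n. \<Sum>i'<n. emb (coeff a i) * emb (coeff b i') * th ^ (i * k + i' * (n - k)))"
      by (simp only: power_add mult_ac)
    finally show "E a k * E b (n - k) = (\<Sum>i<n. \<Sum>i'<n. emb (coeff a i) * emb (coeff b i') * th ^ (i * k + i' * (n - k)))" .
  qed
  also have "\<dots> = (\<Sum>i<n. \<Sum>k<n. \<Sum>i'<n. emb (coeff a i) * emb (coeff b i') * th ^ (i * k + i' * (n - k)))"
    by (rule sum.swap)
  also have "\<dots> = (\<Sum>i<n. \<Sum>i'<n. \<Sum>k<n. emb (coeff a i) * emb (coeff b i') * th ^ (i * k + i' * (n - k)))"
    by (rule sum.cong[OF refl], rule sum.swap)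
  also have "\<dots> = (\<Sum>i<n. \<Sum>i'<n. emb (coeff a i) * emb (coeff b i') * (if i = i' then of_nat n else 0))"
    by (simp add: orth2 flip: sum_distrib_left)
  also have "\<dots> = (\<Sum>i<n. emb (coeff a i) * emb (coeff b i) * of_nat n)"
    by (simp add: if_distrib cong: if_cong)
  also have "\<dots> = of_nat n * emb (\<Sum>i<n. coeff a i * coeff b i)"
    by (simp add: emb_sum sum_distrib_left mult_ac)
  finally show ?thesis by simp
qed

lemma corr:
  assumes a: "a \<in> Rn n" and b: "b \<in> Rn n"
    and h: "\<forall>l<n. (\<Sum>i<n. coeff ((monom 1 l * a) mod xn1 n) i * coeff b i) = 0"
    and k: "k < n"
  shows "E a k * E b (n - k) = 0"
proof (rule dft_uniq[OF _ k, of "\<lambda>k. E a k * E b (n - k)"], intro allI impI)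
  fix l assume l: "l < n"
  have "(\<Sum>k<n. th ^ (l * k) * (E a k * E b (n - k))) = (\<Sum>k<n. E ((monom 1 l * a) mod xn1 n) k * E b (n - k))"
    by (rule sum.cong[OF refl]) (simp only: E_shift mult.assoc)
  also have "\<dots> = of_nat n * emb (\<Sum>i<n. coeff ((monom 1 l * a) mod xn1 n) i * coeff b i)"
    by (rule parseval[symmetric, OF Rn_mod b])
  also have "\<dots> = 0" using h l by simp
  finally show "(\<Sum>k<n. th ^ (l * k) * (E a k * E b (n - k))) = 0" .
qed

end

context iso begin

lemma cong_neg_mod: "[n - y mod n + y = 0] (mod n)"
proof -
  have "y mod n < n" using n_pos by simp
  hence "n - y mod n + y mod n = n" by simp
  hence "(n - y mod n + y) mod n = n mod n" by (metis mod_add_right_eq)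
  thus ?thesis by (simp add: cong_def)
qed

lemma cong_negI: "[x + y = 0] (mod n) \<Longrightarrow> [x' + y = 0] (mod n) \<Longrightarrow> [x = x'] (mod n)"
  by (metis cong_add_rcancel_nat cong_sym cong_trans)

lemma gq_inj: "inj_on (\<lambda>k. (card (UNIV :: 'a set) * k) mod n) {..<n}"
proof (rule inj_onI)
  fix k k' assume "k \<in> {..<n}" "k' \<in> {..<n}" "(card (UNIV :: 'a set) * k) mod n = (card (UNIV :: 'a set) * k') mod n"
  moreover hence "[k = k'] (mod n)" using cop by (simp add: cong_def[symmetric] cong_mult_lcancel_nat)
  ultimately show "k = k'" by (simp add: cong_less_modulus_unique_nat)
qed

definition orb :: "nat \<Rightarrow> nat set" where
  "orb x = (\<lambda>l. (card (UNIV :: 'a set) ^ l * x) mod n) ` UNIV"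

lemma orb_sub: "orb x \<subseteq> {..<n}" using n_pos by (auto simp: orb_def)
lemma orb_fin: "finite (orb x)" using orb_sub finite_subset by blast
lemma orb_closed: "k \<in> orb x \<Longrightarrow> (card (UNIV :: 'a set) * k) mod n \<in> orb x"
proof -
  assume "k \<in> orb x"
  then obtain l where l: "k = (card (UNIV :: 'a set) ^ l * x) mod n" by (auto simp: orb_def)
  hence "(card (UNIV :: 'a set) * k) mod n = (card (UNIV :: 'a set) ^ Suc l * x) mod n"
    by (simp add: mod_mult_right_eq mult.assoc)
  thus ?thesis unfolding orb_def by (intro image_eqI[where x="Suc l"]) auto
qed
lemma orb_self: "x < n \<Longrightarrow> x \<in> orb x"
  by (auto simp: orb_def intro!: image_eqI[of _ _ 0])
lemma orb_perm: "(\<lambda>k. (card (UNIV :: 'a set) * k) mod n) ` orb x = orb x"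
  by (rule endo_inj_surj[OF orb_fin]) (auto intro: orb_closed inj_on_subset[OF gq_inj orb_sub])

definition S :: "nat \<Rightarrow> nat \<Rightarrow> 'b" where "S x i = (\<Sum>k\<in>orb x. th ^ ((n - k) * i))"

lemma S_fix: "S x i ^ card (UNIV :: 'a set) = S x i"
proof -
  let ?q = "card (UNIV :: 'a set)"
  let ?g = "\<lambda>k. (?q * k) mod n"
  have "S x i ^ ?q = (\<Sum>k\<in>orb x. th ^ ((n - k) * i * ?q))"
    unfolding S_def by (simp add: frob_sum power_mult)
  also have "\<dots> = (\<Sum>k\<in>orb x. th ^ ((n - ?g k) * i))"
  proof (rule sum.cong[OF refl])
    fix k assume k: "k \<in> orb x"
    have kn: "k \<le> n" using k orb_sub by (meson lessThan_iff less_imp_le subsetD)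
    have "[n - ?g k = (n - k) * ?q] (mod n)"
    proof (rule cong_negI[OF cong_neg_mod])
      have "(n - k) * ?q + ?q * k = n * ?q" using kn by (simp add: algebra_simps diff_mult_distrib)
      thus "[(n - k) * ?q + ?q * k = 0] (mod n)" by (simp add: cong_def)
    qed
    hence "[(n - ?g k) * i = (n - k) * i * ?q] (mod n)"
      by (metis cong_scalar_right mult.assoc mult.commute)
    thus "th ^ ((n - k) * i * ?q) = th ^ ((n - ?g k) * i)" using th_cong by (metis cong_sym)
  qed
  also have "\<dots> = (\<Sum>k\<in>?g ` orb x. th ^ ((n - k) * i))"
    by (rule sum.reindex[symmetric, unfolded comp_def]) (rule inj_on_subset[OF gq_inj orb_sub])
  also have "\<dots> = S x i" by (simp only: orb_perm S_def)
  finally show ?thesis .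
qed

definition T :: "nat \<Rightarrow> nat \<Rightarrow> 'a" where "T x i = (SOME c. emb c = S x i)"
lemma emb_T: "emb (T x i) = S x i"
  unfolding T_def by (rule someI_ex, rule fixed_in_range, rule S_fix)

definition tr :: "nat \<Rightarrow> 'a poly" where "tr x = (\<Sum>i<n. monom (T x i) i)"

lemma coeff_tr: "coeff (tr x) i = (if i < n then T x i else 0)"
  unfolding tr_def by (simp add: coeff_sum)
lemma tr_Rn: "tr x \<in> Rn n"
proof -
  have "degree (tr x) < n" using n_pos by (intro degree_lessI) (auto simp: coeff_tr)
  thus ?thesis by (simp add: Rn_def)
qed

lemma dvd_shift_iff: "k < n \<Longrightarrow> n dvd (n - k + j) \<longleftrightarrow> j mod n = k"
proof -
  assume k: "k < n"
  have "n dvd (n - k + j) \<longleftrightarrow> [j + (n - k) = k + (n - k)] (mod n)"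
    using k by (simp add: cong_def add.commute mod_eq_0_iff_dvd)
  also have "\<dots> \<longleftrightarrow> [j = k] (mod n)" by (rule cong_add_rcancel_nat)
  also have "\<dots> \<longleftrightarrow> j mod n = k" using k by (simp add: cong_def)
  finally show ?thesis .
qed

lemma E_tr: "E (tr x) j = (if j mod n \<in> orb x then of_nat n else 0)"
proof -
  have "E (tr x) j = (\<Sum>i<n. S x i * th ^ (i * j))"
    by (simp add: E_sum[OF tr_Rn] coeff_tr emb_T)
  also have "\<dots> = (\<Sum>i<n. \<Sum>k\<in>orb x. th ^ (i * (n - k + j)))"
  proof (rule sum.cong[OF refl])
    fix i
    have "th ^ ((n - k) * i) * th ^ (i * j) = th ^ (i * (n - k + j))" for k
    proof -
      have "(n - k) * i + i * j = i * (n - k + j)" by (metis add_mult_distrib2 mult.commute)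
      thus ?thesis by (simp only: power_add[symmetric])
    qed
    thus "S x i * th ^ (i * j) = (\<Sum>k\<in>orb x. th ^ (i * (n - k + j)))"
      by (simp add: S_def sum_distrib_right)
  qed
  also have "\<dots> = (\<Sum>k\<in>orb x. \<Sum>i<n. th ^ (i * (n - k + j)))" by (rule sum.swap)
  also have "\<dots> = (\<Sum>k\<in>orb x. if k = j mod n then of_nat n else 0)"
  proof (rule sum.cong[OF refl])
    fix k assume "k \<in> orb x"
    hence "k < n" using orb_sub by auto
    hence "n dvd (n - k + j) \<longleftrightarrow> k = j mod n" using dvd_shift_iff by auto
    thus "(\<Sum>i<n. th ^ (i * (n - k + j))) = (if k = j mod n then of_nat n else 0)"
      by (simp only: orth)
  qed
  also have "\<dots> = (if j mod n \<in> orb x then of_nat n else 0)"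
    by (simp add: sum.delta[OF orb_fin])
  finally show ?thesis .
qed

lemma ip_tr:
  assumes a: "a \<in> Rn n"
  shows "emb (\<Sum>i<n. coeff a i * coeff (tr x) i) = (\<Sum>k\<in>orb x. E a (n - k))"
proof -
  have "emb (\<Sum>i<n. coeff a i * coeff (tr x) i) = (\<Sum>i<n. emb (coeff a i) * S x i)"
    by (simp add: emb_sum coeff_tr emb_T)
  also have "\<dots> = (\<Sum>i<n. \<Sum>k\<in>orb x. emb (coeff a i) * th ^ (i * (n - k)))"
  proof (rule sum.cong[OF refl])
    fix i
    have "S x i = (\<Sum>k\<in>orb x. th ^ (i * (n - k)))" unfolding S_def
      by (rule sum.cong[OF refl]) (simp only: mult.commute)
    thus "emb (coeff a i) * S x i = (\<Sum>k\<in>orb x. emb (coeff a i) * th ^ (i * (n - k)))"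
      by (simp add: sum_distrib_left)
  qed
  also have "\<dots> = (\<Sum>k\<in>orb x. \<Sum>i<n. emb (coeff a i) * th ^ (i * (n - k)))" by (rule sum.swap)
  also have "\<dots> = (\<Sum>k\<in>orb x. E a (n - k))" by (simp add: E_sum[OF a])
  finally show ?thesis .
qed

lemma phi_Rn: "phi emb th n s' t a \<in> Rn n"
  unfolding phi_def by (rule Rn_mod)

lemma phi_E:
  assumes t: "t < n" "[card (UNIV :: 'a set) * t = t] (mod n)"
  shows "E (phi emb th n s' t a) j = E a (j * s' + (n - t))"
proof -
  let ?q = "card (UNIV :: 'a set)"
  define y where "y = th ^ (n - t)"
  have c1: "[(n - t) * ?q = n - t] (mod n)"
  proof (rule cong_negI[of _ t])
    have "[(n - t) * ?q + t = (n - t) * ?q + ?q * t] (mod n)"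
      using t(2) by (simp add: cong_add_lcancel_nat cong_sym)
    moreover have "(n - t) * ?q + ?q * t = n * ?q" using t(1) by (simp add: algebra_simps diff_mult_distrib)
    ultimately show "[(n - t) * ?q + t = 0] (mod n)" by (simp add: cong_def)
    show "[n - t + t = 0] (mod n)" using t(1) by (simp add: cong_def)
  qed
  have "y ^ ?q = y" unfolding y_def using th_cong[OF c1] by (simp add: power_mult[symmetric])
  then obtain c0 where c0: "emb c0 = y" using fixed_in_range by blast
  have "th ^ t * y = 1" unfolding y_def using t(1) by (simp add: power_add[symmetric])
  hence inv: "inverse (th ^ t) = y" by (metis inverse_unique)
  have the: "(THE c. emb c = inverse (th ^ t)) = c0"
    by (rule the_equality) (use c0 inv in auto)
  have "E (phi emb th n s' t a) j = ev a (y * (th ^ j) ^ s')"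
    unfolding phi_def the by (simp only: E_modx) (simp add: E_def ev_pcompose ev_monom c0)
  also have "y * (th ^ j) ^ s' = th ^ (j * s' + (n - t))"
    unfolding y_def by (simp add: power_add power_mult mult.commute)
  finally show ?thesis by (simp add: E_def)
qed

end

lemma cong_natI: "int x - int y = int n * z \<Longrightarrow> [x = y] (mod n)"
proof -
  assume "int x - int y = int n * z"
  hence "[int x = int y] (mod int n)" by (simp add: cong_iff_dvd_diff)
  thus ?thesis by (simp add: cong_int_iff)
qed

lemma negneg_cong: "j < (n::nat) \<Longrightarrow> [n - (n - j) mod n = j] (mod n)"
proof (cases "j = 0")
  case True thus ?thesis by (simp add: cong_def)
next
  case False
  assume j: "j < n"
  have "n - j < n" using False j by arith
  hence "(n - j) mod n = n - j" by simp
  thus ?thesis using j by (simp add: cong_def)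
qed

lemma negmod_cong: "j \<le> n \<Longrightarrow> [(n - j) mod n + j = 0] (mod (n::nat))"
proof -
  assume "j \<le> n"
  hence "((n - j) mod n + j) mod n = (n - j + j) mod n" by (simp add: mod_add_left_eq)
  thus ?thesis using \<open>j \<le> n\<close> by (simp add: cong_def)
qed

context iso begin

lemma cyc_Rn: "cyclic_code n C \<Longrightarrow> a \<in> C \<Longrightarrow> a \<in> Rn n" by (auto simp: cyclic_code_def)
lemma cyc_shift: "cyclic_code n C \<Longrightarrow> a \<in> C \<Longrightarrow> (monom 1 l * a) mod xn1 n \<in> C"
  by (auto simp: cyclic_code_def)
lemma dual_Rn: "b \<in> dual_code n C \<Longrightarrow> b \<in> Rn n" by (simp add: dual_code_def)
lemma dual_ip: "b \<in> dual_code n C \<Longrightarrow> a \<in> C \<Longrightarrow> (\<Sum>i<n. coeff a i * coeff b i) = 0"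
  by (simp add: dual_code_def)

lemma E_frob: "E a (card (UNIV :: 'a set) * k) = E a k ^ card (UNIV :: 'a set)"
  unfolding E_def by (simp add: ev_frob power_mult[symmetric] mult.commute)

lemma dual_corr:
  assumes C: "cyclic_code n C" and a: "a \<in> C" and b: "b \<in> dual_code n C" and k: "k < n"
  shows "E a k * E b (n - k) = 0"
  by (rule corr[OF cyc_Rn[OF C a] dual_Rn[OF b] _ k])
     (use C a b in \<open>auto intro!: dual_ip cyc_shift\<close>)

lemma forward_Z:
  assumes C: "cyclic_code n C" and tq: "t < n" "[card (UNIV :: 'a set) * t = t] (mod n)"
    and eq: "phi emb th n s' t ` C = dual_code n C"
  defines "Z \<equiv> {k. k < n \<and> (\<forall>a\<in>C. E a k = 0)}"
  shows "\<forall>k\<in>Z. (card (UNIV :: 'a set) * k) mod n \<in> Z"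
    and "\<forall>j<n. ((j * s' + (n - t)) mod n \<in> Z \<longleftrightarrow> (n - j) mod n \<notin> Z)"
proof -
  let ?q = "card (UNIV :: 'a set)"
  have q0: "?q > 0" using q_ge2 by simp
  show Zq: "\<forall>k\<in>Z. (?q * k) mod n \<in> Z"
  proof
    fix k assume "k \<in> Z"
    hence "E a k = 0" if "a \<in> C" for a using that by (auto simp: Z_def)
    hence "E a ((?q * k) mod n) = 0" if "a \<in> C" for a
      using that q0 by (simp add: E_mod[symmetric] E_frob)
    thus "(?q * k) mod n \<in> Z" using n_pos by (auto simp: Z_def)
  qed
  have Zql: "(?q ^ l * k) mod n \<in> Z" if "k \<in> Z" for l k
  proof (induction l)
    case 0 thus ?case using that by (auto simp: Z_def)
  next
    case (Suc l)
    have "(?q ^ Suc l * k) mod n = (?q * ((?q ^ l * k) mod n)) mod n"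
      by (simp add: mod_mult_right_eq mult.assoc)
    thus ?case using Zq Suc by simp
  qed
  show "\<forall>j<n. ((j * s' + (n - t)) mod n \<in> Z \<longleftrightarrow> (n - j) mod n \<notin> Z)"
  proof (intro allI impI iffI)
    fix j assume j: "j < n"
    assume psi: "(j * s' + (n - t)) mod n \<in> Z"
    show "(n - j) mod n \<notin> Z"
    proof
      assume nu: "(n - j) mod n \<in> Z"
      have e_dual: "tr j \<in> dual_code n C"
      proof -
        have "(\<Sum>i<n. coeff a i * coeff (tr j) i) = 0" if a: "a \<in> C" for a
        proof -
          have "E a (n - k) = 0" if k: "k \<in> orb j" for k
          proof -
            obtain l where l: "k = (?q ^ l * j) mod n" using k by (auto simp: orb_def)
            have "[n - k = ?q ^ l * ((n - j) mod n)] (mod n)"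
            proof (rule cong_negI[of _ "?q ^ l * j"])
              show "[n - k + ?q ^ l * j = 0] (mod n)" unfolding l by (rule cong_neg_mod)
              have "[(n - j) mod n + j = 0] (mod n)" using j by (simp add: negmod_cong)
              hence "[?q ^ l * ((n - j) mod n + j) = ?q ^ l * 0] (mod n)" by (rule cong_scalar_left)
              thus "[?q ^ l * ((n - j) mod n) + ?q ^ l * j = 0] (mod n)" by (simp add: distrib_left)
            qed
            hence "E a (n - k) = E a ((?q ^ l * ((n - j) mod n)) mod n)"
              by (metis E_cong E_mod)
            also have "\<dots> = 0" using Zql[OF nu, of l] a by (auto simp: Z_def)
            finally show ?thesis .
          qed
          hence "emb (\<Sum>i<n. coeff a i * coeff (tr j) i) = 0"
            by (simp add: ip_tr[OF cyc_Rn[OF C a]])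
          thus ?thesis by simp
        qed
        thus ?thesis using tr_Rn by (simp add: dual_code_def)
      qed
      then obtain a0 where a0: "a0 \<in> C" "tr j = phi emb th n s' t a0" using eq by blast
      have "E (tr j) j = E a0 (j * s' + (n - t))" using a0(2) phi_E[OF tq] by simp
      also have "\<dots> = E a0 ((j * s' + (n - t)) mod n)" by (rule E_mod)
      also have "\<dots> = 0" using psi a0(1) by (auto simp: Z_def)
      finally have "E (tr j) j = 0" .
      moreover have "E (tr j) j = of_nat n" using j orb_self[OF j] by (simp add: E_tr)
      ultimately show False using n_nz by simp
    qed
  next
    fix j assume j: "j < n" and nu: "(n - j) mod n \<notin> Z"
    show "(j * s' + (n - t)) mod n \<in> Z"
    proof (rule ccontr)
      assume psi: "(j * s' + (n - t)) mod n \<notin> Z"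
      then obtain a where a: "a \<in> C" "E a ((j * s' + (n - t)) mod n) \<noteq> 0"
        using n_pos by (auto simp: Z_def)
      have nl: "(n - j) mod n < n" using n_pos by simp
      obtain a' where a': "a' \<in> C" "E a' ((n - j) mod n) \<noteq> 0"
        using nu nl by (auto simp: Z_def)
      have b: "phi emb th n s' t a \<in> dual_code n C" using eq a(1) by blast
      have "E a' ((n - j) mod n) * E (phi emb th n s' t a) (n - (n - j) mod n) = 0"
        by (rule dual_corr[OF C a'(1) b nl])
      moreover have "E (phi emb th n s' t a) (n - (n - j) mod n) = E (phi emb th n s' t a) j"
        by (rule E_cong[OF negneg_cong[OF j]])
      moreover have "E (phi emb th n s' t a) j = E a ((j * s' + (n - t)) mod n)"
        using phi_E[OF tq] E_mod by metis
      ultimately show False using a(2) a'(2) by simp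
    qed
  qed
qed

end

lemma card_residue:
  fixes n P m c :: nat
  assumes "n = P * m" "c < P"
  shows "card {k. k < n \<and> k mod P = c} = m"
proof -
  have P: "P > 0" using assms by simp
  have eq: "{k. k < n \<and> k mod P = c} = (\<lambda>l. c + P * l) ` {..<m}"
  proof (intro equalityI subsetI)
    fix k assume "k \<in> {k. k < n \<and> k mod P = c}"
    hence k: "k < P * m" "k mod P = c" using assms by auto
    have "k = c + P * (k div P)" using k(2) by (metis mod_mult_div_eq)
    moreover have "k div P < m" using k(1) by (metis less_mult_imp_div_less mult.commute)
    ultimately show "k \<in> (\<lambda>l. c + P * l) ` {..<m}" by blast
  next
    fix k assume "k \<in> (\<lambda>l. c + P * l) ` {..<m}"
    then obtain l where l: "l < m" "k = c + P * l" by auto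
    have "c + P * l < P + P * l" using assms by simp
    also have "\<dots> = P * Suc l" by simp
    also have "\<dots> \<le> P * m" using l by (intro mult_le_mono2) simp
    finally have "k < n" using l assms by simp
    moreover have "k mod P = c" using l assms by simp
    ultimately show "k \<in> {k. k < n \<and> k mod P = c}" by simp
  qed
  have "inj_on (\<lambda>l. c + P * l) {..<m}" using P by (intro inj_onI) simp
  thus ?thesis unfolding eq by (simp add: card_image)
qed

lemma count_contra:
  fixes n P m q u t y0 i :: nat and Z :: "nat set"
  assumes nPm: "n = P * m" and P: "P > 0" and m: "odd m" and cq: "coprime q n" and cu: "coprime u n"
    and Z: "Z \<subseteq> {..<n}" and Zq: "\<forall>k\<in>Z. (q * k) mod n \<in> Z"
    and t: "t < n"
    and H: "\<forall>j<n. ((j * u + (n - t)) mod n \<in> Z \<longleftrightarrow> (n - j) mod n \<notin> Z)"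
    and i: "i \<le> 1" and y: "[(q ^ i + u) * y0 + t = 0] (mod P)"
  shows False
proof -
  have n0: "n > 0" using t by simp
  define f where "f k = (((n - k) mod n) * u + (n - t)) mod n" for k
  have fn: "f k < n" for k using n0 by (simp add: f_def)
  have fZ: "f k \<in> Z \<longleftrightarrow> k \<notin> Z" if k: "k < n" for k
  proof -
    have "(n - (n - k) mod n) mod n = k" using negneg_cong[OF k] k by (simp add: cong_def)
    thus ?thesis using H[rule_format, of "(n - k) mod n"] n0 by (simp add: f_def)
  qed
  have f_inj: "inj_on f {..<n}"
  proof (rule inj_onI)
    fix k k' assume kk: "k \<in> {..<n}" "k' \<in> {..<n}" "f k = f k'"
    hence "[(n - k) mod n * u + (n - t) = (n - k') mod n * u + (n - t)] (mod n)"
      by (simp add: f_def cong_def)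
    hence "[u * ((n - k) mod n) = u * ((n - k') mod n)] (mod n)"
      by (simp add: cong_add_rcancel_nat mult.commute)
    hence "[(n - k) mod n = (n - k') mod n] (mod n)" using cu by (simp add: cong_mult_lcancel_nat)
    hence "(n - k) mod n = (n - k') mod n" by (simp add: cong_def)
    hence "[k = k'] (mod n)" using negneg_cong[of k n] negneg_cong[of k' n] kk
      by (metis cong_sym cong_trans lessThan_iff)
    thus "k = k'" using kk by (simp add: cong_less_modulus_unique_nat)
  qed
  have f_cong: "[f k + u * k + t = 0] (mod n)" if k: "k < n" for k
  proof -
    have "[f k + u * k + t = ((n - k) mod n * u + (n - t)) + u * k + t] (mod n)"
      unfolding f_def by (intro cong_add cong_refl) simp
    also have "((n - k) mod n * u + (n - t)) + u * k + t = ((n - k) mod n + k) * u + n"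
      using t by (simp add: algebra_simps)
    also have "[((n - k) mod n + k) * u + n = 0 * u + 0] (mod n)"
      by (intro cong_add cong_mult negmod_cong cong_refl) (use k in \<open>auto simp: cong_def\<close>)
    finally show ?thesis by simp
  qed
  have Pn: "P dvd n" using nPm by simp
  define W where "W = {k. k < n \<and> k mod P = y0 mod P}"
  define W' where "W' = {k. k < n \<and> k mod P = (q ^ i * y0) mod P}"
  have cW: "card W = m" unfolding W_def by (rule card_residue[OF nPm]) (use P in simp)
  have cW': "card W' = m" unfolding W'_def by (rule card_residue[OF nPm]) (use P in simp)
  have finW: "finite W" "finite W'" by (auto simp: W_def W'_def)
  have fW: "f k \<in> W'" if k: "k \<in> W" for k
  proof -
    have kn: "k < n" and kP: "[k = y0] (mod P)" using k by (auto simp: W_def cong_def)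
    have a1: "[f k + (u * k + t) = 0] (mod P)"
      using cong_dvd_modulus_nat[OF f_cong[OF kn] Pn] by (simp add: add.assoc)
    have "[u * k = u * y0] (mod P)" using kP by (rule cong_scalar_left)
    hence "[q ^ i * y0 + (u * k + t) = q ^ i * y0 + (u * y0 + t)] (mod P)"
      by (intro cong_add cong_refl)
    also have "q ^ i * y0 + (u * y0 + t) = (q ^ i + u) * y0 + t" by (simp add: algebra_simps)
    also have "[\<dots> = 0] (mod P)" by (rule y)
    finally have "[f k + (u * k + t) = q ^ i * y0 + (u * k + t)] (mod P)"
      using a1 by (metis cong_sym cong_trans)
    hence "[f k = q ^ i * y0] (mod P)" by (simp add: cong_add_rcancel_nat)
    thus ?thesis using fn by (simp add: W'_def cong_def)
  qed
  define g where "g k = (q ^ i * k) mod n" for k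
  have cqi: "coprime (q ^ i) n" using cq by simp
  have g_inj: "inj_on g {..<n}"
  proof (rule inj_onI)
    fix k k' assume kk: "k \<in> {..<n}" "k' \<in> {..<n}" "g k = g k'"
    hence "[q ^ i * k = q ^ i * k'] (mod n)" by (simp add: g_def cong_def)
    hence "[k = k'] (mod n)" using cqi by (simp add: cong_mult_lcancel_nat)
    thus "k = k'" using kk by (simp add: cong_less_modulus_unique_nat)
  qed
  have gW: "g k \<in> W'" if k: "k \<in> W" for k
  proof -
    have "(g k) mod P = (q ^ i * k) mod P" unfolding g_def using Pn by (simp add: mod_mod_cancel)
    also have "\<dots> = (q ^ i * (k mod P)) mod P" by (simp add: mod_mult_right_eq)
    also have "\<dots> = (q ^ i * (y0 mod P)) mod P" using k by (simp add: W_def)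
    also have "\<dots> = (q ^ i * y0) mod P" by (simp add: mod_mult_right_eq)
    finally show ?thesis using n0 by (simp add: W'_def g_def)
  qed
  have gq_inj: "inj_on (\<lambda>k. (q * k) mod n) {..<n}"
  proof (rule inj_onI)
    fix k k' assume kk: "k \<in> {..<n}" "k' \<in> {..<n}" "(q * k) mod n = (q * k') mod n"
    hence "[q * k = q * k'] (mod n)" by (simp add: cong_def)
    hence "[k = k'] (mod n)" using cq by (simp add: cong_mult_lcancel_nat)
    thus "k = k'" using kk by (simp add: cong_less_modulus_unique_nat)
  qed
  have finZ: "finite Z" using Z finite_subset by blast
  have gqZ: "(\<lambda>k. (q * k) mod n) ` Z = Z"
    by (rule endo_inj_surj[OF finZ]) (use Zq inj_on_subset[OF gq_inj Z] in auto)
  have gZ: "g k \<in> Z \<longleftrightarrow> k \<in> Z" if k: "k < n" for k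
  proof (cases "i = 0")
    case True thus ?thesis using k by (simp add: g_def)
  next
    case False
    hence i1: "i = 1" using i by simp
    show ?thesis
    proof
      assume "g k \<in> Z"
      hence "(q * k) mod n \<in> (\<lambda>k. (q * k) mod n) ` Z" using gqZ i1 by (simp add: g_def)
      then obtain z where z: "z \<in> Z" "(q * k) mod n = (q * z) mod n" by auto
      have "z < n" using z Z by auto
      hence "k = z" using inj_onD[OF gq_inj z(2)] k by simp
      thus "k \<in> Z" using z by simp
    qed (use Zq i1 in \<open>simp add: g_def\<close>)
  qed
  define A where "A = W \<inter> Z"
  define B where "B = W - Z"
  define A' where "A' = W' \<inter> Z"
  define B' where "B' = W' - Z"
  have Wn: "W \<subseteq> {..<n}" by (auto simp: W_def)
  have finA: "finite A" "finite B" "finite A'" "finite B'" using finW by (auto simp: A_def B_def A'_def B'_def)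
  have AW: "A \<subseteq> {..<n}" "B \<subseteq> {..<n}" using Wn by (auto simp: A_def B_def)
  have c1: "card A \<le> card B'"
  proof (rule card_inj_on_le[OF inj_on_subset[OF f_inj AW(1)] _ finA(4)])
    show "f ` A \<subseteq> B'"
    proof
      fix x assume "x \<in> f ` A"
      then obtain k where k: "k \<in> W" "k \<in> Z" "x = f k" by (auto simp: A_def)
      have "k < n" using k Wn by auto
      thus "x \<in> B'" using k fW[OF k(1)] fZ[of k] by (simp add: B'_def)
    qed
  qed
  have c2: "card B \<le> card A'"
  proof (rule card_inj_on_le[OF inj_on_subset[OF f_inj AW(2)] _ finA(3)])
    show "f ` B \<subseteq> A'"
    proof
      fix x assume "x \<in> f ` B"
      then obtain k where k: "k \<in> W" "k \<notin> Z" "x = f k" by (auto simp: B_def)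
      have "k < n" using k Wn by auto
      thus "x \<in> A'" using k fW[OF k(1)] fZ[of k] by (simp add: A'_def)
    qed
  qed
  have c3: "card A \<le> card A'"
  proof (rule card_inj_on_le[OF inj_on_subset[OF g_inj AW(1)] _ finA(3)])
    show "g ` A \<subseteq> A'"
    proof
      fix x assume "x \<in> g ` A"
      then obtain k where k: "k \<in> W" "k \<in> Z" "x = g k" by (auto simp: A_def)
      have "k < n" using k Wn by auto
      thus "x \<in> A'" using k gW[OF k(1)] gZ[of k] by (simp add: A'_def)
    qed
  qed
  have c4: "card B \<le> card B'"
  proof (rule card_inj_on_le[OF inj_on_subset[OF g_inj AW(2)] _ finA(4)])
    show "g ` B \<subseteq> B'"
    proof
      fix x assume "x \<in> g ` B"
      then obtain k where k: "k \<in> W" "k \<notin> Z" "x = g k" by (auto simp: B_def)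
      have "k < n" using k Wn by auto
      thus "x \<in> B'" using k gW[OF k(1)] gZ[of k] by (simp add: B'_def)
    qed
  qed
  have "A \<union> B = W" "A \<inter> B = {}" by (auto simp: A_def B_def)
  hence s1: "card A + card B = m" using card_Un_disjoint[OF finA(1,2)] cW by simp
  have "A' \<union> B' = W'" "A' \<inter> B' = {}" by (auto simp: A'_def B'_def)
  hence s2: "card A' + card B' = m" using card_Un_disjoint[OF finA(3,4)] cW' by simp
  have "m = 2 * card A" using c1 c2 c3 c4 s1 s2 by linarith
  thus False using m by simp
qed

lemma two_adic:
  fixes a b q u t :: nat
  assumes a1: "a \<ge> 1" and ab: "2 * b \<le> a" and qodd: "odd q" and q2: "q \<ge> 2"
    and bdef: "b = multiplicity 2 (q - 1)"
    and uodd: "odd u" and dv: "2 ^ a dvd (q - 1) * t"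
  shows "\<exists>i\<le>1. \<exists>y0. [(q ^ i + u) * y0 + t = 0] (mod 2 ^ a)"
proof -
  have q10: "q - 1 \<noteq> 0" using q2 by simp
  obtain w where qw: "q - 1 = 2 ^ b * w" "\<not> 2 dvd w"
    using multiplicity_decompose'[OF q10, of 2] bdef by auto
  have "even (q - 1)" using qodd q2 by simp
  hence b1: "b \<ge> 1" using qw by (cases b) auto
  have ba: "b \<le> a" using ab by simp
  have "2 ^ b * 2 ^ (a - b) dvd 2 ^ b * (w * t)"
    using dv qw ba by (simp add: power_add[symmetric] mult.assoc)
  hence "2 ^ (a - b) dvd w * t" by (simp add: nat_mult_dvd_cancel_disj)
  moreover have "coprime (2 ^ (a - b)) w" using qw by simp
  ultimately have ht: "2 ^ (a - b) dvd t" by (simp add: coprime_dvd_mult_right_iff)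
  have u10: "1 + u \<noteq> 0" by simp
  obtain v1 where uv: "1 + u = 2 ^ multiplicity 2 (1 + u) * v1" "\<not> 2 dvd v1"
    using multiplicity_decompose'[OF u10, of 2] by auto
  define c1 where "c1 = multiplicity 2 (1 + u)"
  obtain c v i where cvi: "q ^ i + u = 2 ^ c * v" "odd v" "c \<le> b" "i \<le> 1"
  proof (cases "c1 \<le> b")
    case True thus ?thesis using that[of 0 c1 v1] uv c1_def by simp
  next
    case False
    have "q + u = (q - 1) + (1 + u)" using q2 by simp
    also have "\<dots> = 2 ^ b * w + 2 ^ c1 * v1" using qw uv c1_def by simp
    also have "(2::nat) ^ c1 = 2 ^ b * 2 ^ (c1 - b)" using False by (simp add: power_add[symmetric])
    finally have "q + u = 2 ^ b * (w + 2 ^ (c1 - b) * v1)" by (simp add: algebra_simps)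
    moreover have "odd (w + 2 ^ (c1 - b) * v1)" using qw False by simp
    ultimately show ?thesis using that[of 1 b "w + 2 ^ (c1 - b) * v1"] by simp
  qed
  have "c \<le> a - b" using cvi(3) ab by linarith
  hence "(2::nat) ^ c dvd 2 ^ (a - b)" by (rule le_imp_power_dvd)
  hence "2 ^ c dvd t" using ht by (rule dvd_trans)
  then obtain t' where t': "t = 2 ^ c * t'" by auto
  have cv: "coprime v (2 ^ a)" using cvi(2) by simp
  obtain v' where v': "[v * v' = 1] (mod 2 ^ a)" using cong_solve_coprime_nat[OF cv] by auto
  define y0 where "y0 = v' * t' * (2 ^ a - 1)"
  have k1: "[v * v' * (2 ^ a - 1) + 1 = 1 * (2 ^ a - 1) + 1] (mod 2 ^ a)"
    by (intro cong_add cong_mult v' cong_refl)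
  have "1 * (2 ^ a - 1) + 1 = (2::nat) ^ a" by simp
  hence k2: "[v * v' * (2 ^ a - 1) + 1 = 0] (mod 2 ^ a)" using k1 by (simp add: cong_def)
  have "(q ^ i + u) * y0 + t = 2 ^ c * t' * (v * v' * (2 ^ a - 1) + 1)"
    unfolding y0_def cvi(1) t' by (simp add: algebra_simps)
  moreover have "[2 ^ c * t' * (v * v' * (2 ^ a - 1) + 1) = 2 ^ c * t' * 0] (mod 2 ^ a)"
    by (rule cong_scalar_left[OF k2])
  ultimately have "[(q ^ i + u) * y0 + t = 0] (mod 2 ^ a)" by simp
  thus ?thesis using cvi(4) by blast
qed

context iso begin

lemma E_diff: "E (p - r) j = E p j - E r j" by (simp add: E_def ev_diff)
lemma Rn_add: "(p::'a poly) \<in> Rn n \<Longrightarrow> r \<in> Rn n \<Longrightarrow> p + r \<in> Rn n"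
proof -
  assume "p \<in> Rn n" "r \<in> Rn n"
  hence "degree p < n" "degree r < n" by (auto simp: Rn_deg)
  hence "degree (p + r) < n" using degree_add_le_max[of p r] by linarith
  thus ?thesis by (simp add: Rn_def)
qed
lemma Rn_diff: "(p::'a poly) \<in> Rn n \<Longrightarrow> r \<in> Rn n \<Longrightarrow> p - r \<in> Rn n"
proof -
  assume "p \<in> Rn n" "r \<in> Rn n"
  hence "degree p < n" "degree r < n" by (auto simp: Rn_deg)
  hence "degree (p - r) < n" using degree_diff_le_max[of p r] by linarith
  thus ?thesis by (simp add: Rn_def)
qed

lemma backward:
  assumes a0: "0 < multiplicity (2::nat) n"
    and ab: "multiplicity (2::nat) n < 2 * multiplicity (2::nat) (card (UNIV :: 'a set) - 1)"
  shows "\<exists>C. cyclic_code n C \<and> iso_self_dual emb th n C"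
proof -
  let ?q = "card (UNIV :: 'a set)"
  define a where "a = multiplicity (2::nat) n"
  define b where "b = multiplicity (2::nat) (?q - 1)"
  have n0: "n \<noteq> 0" using n_pos by simp
  obtain m where nm: "n = 2 ^ a * m" "\<not> 2 dvd m"
    using multiplicity_decompose'[OF n0, of 2] a_def by auto
  have q10: "?q - 1 \<noteq> 0" using q_ge2 by simp
  obtain w where qw: "?q - 1 = 2 ^ b * w" "\<not> 2 dvd w"
    using multiplicity_decompose'[OF q10, of 2] b_def by auto
  have a1: "a \<ge> 1" using a0 a_def by simp
  have a2b: "a < 2 * b" using ab a_def b_def by simp
  define r where "r = a - b"
  have r1: "r < a" "Suc r \<le> b" "a \<le> r + b" using a1 a2b unfolding r_def by auto
  define R where "R = (2::nat) ^ Suc r"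
  have "R dvd 2 ^ a" unfolding R_def using r1 by (intro le_imp_power_dvd) simp
  hence Rn': "R dvd n" unfolding nm(1) by (rule dvd_mult2)
  have "R dvd 2 ^ b" unfolding R_def using r1 by (intro le_imp_power_dvd) simp
  hence Rq: "R dvd ?q - 1" unfolding qw(1) by (rule dvd_mult2)
  have m1: "m \<ge> 1" using nm by (cases m) auto
  define t where "t = 2 ^ r * m"
  have tn: "t < n" unfolding t_def nm(1) using r1 m1 by simp
  have tq: "[?q * t = t] (mod n)"
  proof -
    have "(?q - 1) * t = n * (2 ^ (r + b - a) * w)"
      unfolding qw(1) t_def nm(1) using r1
      by (simp add: algebra_simps power_add[symmetric])
    moreover have "?q * t = t + (?q - 1) * t" using q_ge2 by (simp add: algebra_simps)
    ultimately have "?q * t = t + n * (2 ^ (r + b - a) * w)" by simp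
    thus ?thesis by (simp add: cong_def)
  qed
  define Z where "Z = {k. k < n \<and> k mod R < 2 ^ r}"
  have Zqiff: "(?q * k) mod n \<in> Z \<longleftrightarrow> k \<in> Z" if k: "k < n" for k
  proof -
    have "?q * k = k + (?q - 1) * k" using q_ge2 by (simp add: algebra_simps)
    moreover obtain z where "?q - 1 = R * z" using Rq by auto
    ultimately have "?q * k = k + R * (z * k)" by simp
    hence "((?q * k) mod n) mod R = k mod R" using Rn' by (simp add: mod_mod_cancel)
    thus ?thesis using k n_pos by (simp add: Z_def)
  qed
  have Zback: "(?q ^ l * y) mod n \<in> Z \<Longrightarrow> y < n \<Longrightarrow> y \<in> Z" for l y
  proof (induction l arbitrary: y)
    case 0 thus ?case by simp
  next
    case (Suc l)
    have "?q ^ Suc l * y = ?q ^ l * (?q * y)" by (simp only: power_Suc2 mult.assoc)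
    hence e: "(?q ^ Suc l * y) mod n = (?q ^ l * ((?q * y) mod n)) mod n"
      by (simp only: mod_mult_right_eq)
    have yn: "(?q * y) mod n < n" using n_pos by simp
    have "(?q * y) mod n \<in> Z" using Suc.IH[OF _ yn] Suc.prems(1) e by simp
    thus ?case using Zqiff[OF Suc.prems(2)] by simp
  qed
  have tR: "t mod R = 2 ^ r"
  proof -
    obtain m' where "m = 2 * m' + 1" using nm(2) by (metis oddE)
    hence "t = 2 ^ r + R * m'" unfolding t_def R_def by (simp add: algebra_simps)
    thus ?thesis unfolding R_def by simp
  qed
  have flip: "x mod n \<in> Z \<longleftrightarrow> (x + t) mod n \<notin> Z" for x
  proof -
    have e1: "(x mod n) mod R = x mod R" "((x + t) mod n) mod R = (x + t) mod R"
      using Rn' by (simp_all add: mod_mod_cancel)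
    have e2: "(x + t) mod R = (x mod R + 2 ^ r) mod R" using tR by (metis mod_add_eq mod_mod_trivial)
    have RR: "R = 2 ^ r + 2 ^ r" unfolding R_def by simp
    have y: "x mod R < R" unfolding R_def by simp
    have "x mod R < 2 ^ r \<longleftrightarrow> \<not> (x mod R + 2 ^ r) mod R < 2 ^ r"
    proof (cases "x mod R < 2 ^ r")
      case True
      hence "(x mod R + 2 ^ r) mod R = x mod R + 2 ^ r" using RR by simp
      thus ?thesis using True by simp
    next
      case False
      have "x mod R + 2 ^ r = R + (x mod R - 2 ^ r)" using False RR by simp
      hence "(x mod R + 2 ^ r) mod R = (x mod R - 2 ^ r) mod R" by simp
      also have "\<dots> = x mod R - 2 ^ r" using y by simp
      finally have e: "(x mod R + 2 ^ r) mod R = x mod R - 2 ^ r" .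
      have "x mod R - 2 ^ r < 2 ^ r" using y RR by linarith
      thus ?thesis using False e by simp
    qed
    thus ?thesis using e1 e2 n_pos by (simp add: Z_def)
  qed
  define C where "C = {p \<in> Rn n. \<forall>k\<in>Z. E p k = 0}"
  have Ccyc: "cyclic_code n C"
    unfolding cyclic_code_def
  proof (intro conjI ballI allI)
    show "C \<subseteq> Rn n" by (auto simp: C_def)
    show "0 \<in> C" by (simp add: C_def Rn_def E_def)
  next
    fix p r assume "p \<in> C" "r \<in> C" thus "p + r \<in> C" by (auto simp: C_def Rn_add E_add)
  next
    fix p r assume "p \<in> C" thus "(r * p) mod xn1 n \<in> C" by (auto simp: C_def Rn_mod E_modx E_mult)
  qed
  let ?phi = "phi emb th n (n - 1) t"
  have phiE: "E (?phi p) j = E p (j * (n - 1) + (n - t))" for p j by (rule phi_E[OF tn tq])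
  have h1: "[((n - k) * (n - 1) + (n - t)) + t = k] (mod n)" if "k \<le> n" for k
  proof (rule cong_natI[where z="int n - int k"])
    have n1: "1 \<le> n" using n_pos by simp
    have tl: "t \<le> n" using tn by simp
    show "int ((n - k) * (n - 1) + (n - t) + t) - int k = int n * (int n - int k)"
      by (simp only: of_nat_add of_nat_mult of_nat_diff[OF that] of_nat_diff[OF n1] of_nat_diff[OF tl] of_nat_1)
         (simp add: algebra_simps)
  qed
  have h2: "[(j * (n - 1) + (n - t)) * (n - 1) + (n - t) = j] (mod n)" for j
  proof (rule cong_natI[where z="int j * (int n - 2) + int n - int t"])
    have n1: "1 \<le> n" using n_pos by simp
    have tl: "t \<le> n" using tn by simp
    show "int ((j * (n - 1) + (n - t)) * (n - 1) + (n - t)) - int j = int n * (int j * (int n - 2) + int n - int t)"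
      by (simp only: of_nat_add of_nat_mult of_nat_diff[OF n1] of_nat_diff[OF tl] of_nat_1)
         (simp add: algebra_simps)
  qed
  have h3: "(n - (k * (n - 1) + (n - t)) mod n) mod n = (k + t) mod n" for k
  proof -
    have "[n - (k * (n - 1) + (n - t)) mod n = k + t] (mod n)"
    proof (rule cong_negI[OF cong_neg_mod])
      show "[k + t + (k * (n - 1) + (n - t)) = 0] (mod n)"
      proof (rule cong_natI[where z="int k + 1"])
        have n1: "1 \<le> n" using n_pos by simp
        have tl: "t \<le> n" using tn by simp
        show "int (k + t + (k * (n - 1) + (n - t))) - int 0 = int n * (int k + 1)"
          by (simp only: of_nat_add of_nat_mult of_nat_diff[OF n1] of_nat_diff[OF tl] of_nat_1 of_nat_0)
             (simp add: algebra_simps)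
      qed
    qed
    thus ?thesis by (simp add: cong_def)
  qed
  have sub1: "?phi ` C \<subseteq> dual_code n C"
  proof
    fix x assume "x \<in> ?phi ` C"
    then obtain p where p: "p \<in> C" "x = ?phi p" by auto
    have pR: "p \<in> Rn n" using p by (simp add: C_def)
    have "(\<Sum>i<n. coeff a' i * coeff x i) = 0" if a': "a' \<in> C" for a'
    proof -
      have a'R: "a' \<in> Rn n" using a' by (simp add: C_def)
      have "E a' k * E x (n - k) = 0" if k: "k < n" for k
      proof (cases "k \<in> Z")
        case True thus ?thesis using a' by (simp add: C_def)
      next
        case False
        define y where "y = (n - k) * (n - 1) + (n - t)"
        have "(y + t) mod n = k" using h1[of k] k by (simp add: y_def cong_def)
        hence "y mod n \<in> Z" using flip[of y] False by simp
        hence "E p (y mod n) = 0" using p by (simp add: C_def)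
        hence "E x (n - k) = 0" using p(2) phiE[of p "n - k"] E_mod[of p y] by (simp add: y_def)
        thus ?thesis by simp
      qed
      hence z: "(\<Sum>k<n. E a' k * E x (n - k)) = 0" by (intro sum.neutral) auto
      have xR: "x \<in> Rn n" using p(2) phi_Rn by simp
      have "of_nat n * emb (\<Sum>i<n. coeff a' i * coeff x i) = 0"
        by (simp only: parseval[OF a'R xR] z)
      thus ?thesis using n_nz by simp
    qed
    moreover have "x \<in> Rn n" using p(2) phi_Rn by simp
    ultimately show "x \<in> dual_code n C" by (simp add: dual_code_def)
  qed
  have sub2: "dual_code n C \<subseteq> ?phi ` C"
  proof
    fix x assume x: "x \<in> dual_code n C"
    have xR: "x \<in> Rn n" using x by (simp add: dual_code_def)
    have vanish: "E x j = 0" if j: "j < n" "(n - j) mod n \<notin> Z" for j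
    proof -
      define \<nu> where "\<nu> = (n - j) mod n"
      have nu: "\<nu> < n" using n_pos by (simp add: \<nu>_def)
      have eC: "tr \<nu> \<in> C"
      proof -
        have "E (tr \<nu>) k = 0" if k: "k \<in> Z" for k
        proof -
          have kn: "k < n" using k by (simp add: Z_def)
          have "k \<notin> orb \<nu>"
          proof
            assume "k \<in> orb \<nu>"
            then obtain l where "k = (?q ^ l * \<nu>) mod n" by (auto simp: orb_def)
            hence "\<nu> \<in> Z" using Zback[of l \<nu>] k nu by simp
            thus False using j(2) \<nu>_def by simp
          qed
          thus ?thesis using kn by (simp add: E_tr)
        qed
        thus ?thesis using tr_Rn by (simp add: C_def)
      qed
      have "E (tr \<nu>) \<nu> * E x (n - \<nu>) = 0" by (rule dual_corr[OF Ccyc eC x nu])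
      moreover have "E (tr \<nu>) \<nu> = of_nat n" using nu orb_self[OF nu] by (simp add: E_tr)
      moreover have "E x (n - \<nu>) = E x j" unfolding \<nu>_def by (rule E_cong[OF negneg_cong[OF j(1)]])
      ultimately show ?thesis using n_nz by simp
    qed
    define p where "p = ?phi x"
    have pR: "p \<in> Rn n" using phi_Rn by (simp add: p_def)
    have "?phi p - x = 0"
    proof (rule poly_uniq)
      show "?phi p - x \<in> Rn n" by (rule Rn_diff[OF phi_Rn xR])
      show "\<forall>j<n. E (?phi p - x) j = 0"
      proof (intro allI impI)
        fix j assume "j < n"
        have "E (?phi p) j = E x ((j * (n - 1) + (n - t)) * (n - 1) + (n - t))"
          by (simp only: phiE p_def)
        also have "\<dots> = E x j" by (rule E_cong[OF h2])
        finally show "E (?phi p - x) j = 0" by (simp add: E_diff)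
      qed
    qed
    hence px: "x = ?phi p" by simp
    have "p \<in> C"
    proof -
      have "E p k = 0" if k: "k \<in> Z" for k
      proof -
        define j where "j = (k * (n - 1) + (n - t)) mod n"
        have jn: "j < n" using n_pos by (simp add: j_def)
        have kn: "k < n" using k by (simp add: Z_def)
        have "(n - j) mod n = (k + t) mod n" unfolding j_def by (rule h3)
        moreover have "(k + t) mod n \<notin> Z" using flip[of k] k kn by simp
        ultimately have "E x j = 0" using vanish[OF jn] by simp
        thus ?thesis unfolding p_def phiE j_def by (simp add: E_mod[symmetric])
      qed
      thus ?thesis using pR by (simp add: C_def)
    qed
    thus "x \<in> ?phi ` C" using px by blast
  qed
  have n2: "n \<ge> 2"
  proof -
    have "2 dvd n" using nm a1 by (simp add: dvd_power)
    thus ?thesis using n_pos by (auto dest: dvd_imp_le)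
  qed
  have "iso_self_dual emb th n C"
    unfolding iso_self_dual_def
  proof (intro exI conjI)
    show "n - 1 < n" using n_pos by simp
    show "coprime (n - 1) n" using coprime_diff_one_left_nat[OF n_pos] .
    show "0 < n - 1" using n2 by simp
    show "[(n - 1) * (n - 1) = 1] (mod n)"
    proof (rule cong_natI[where z="int n - 2"])
      have n1: "1 \<le> n" using n2 by simp
      show "int ((n - 1) * (n - 1)) - int 1 = int n * (int n - 2)"
        by (simp only: of_nat_mult of_nat_diff[OF n1] of_nat_1) (simp add: algebra_simps)
    qed
    show "t < n" by (rule tn)
    show "[?q * t = t] (mod n)" by (rule tq)
    show "?phi ` C = dual_code n C" using sub1 sub2 by blast
  qed
  thus ?thesis using Ccyc by blast
qed

end

theorem theorem4p1:
  fixes emb :: "'a::{finite,field} \<Rightarrow> 'b::field" and \<theta> :: 'b and n :: nat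
  assumes "n > 0"
    and "coprime (card (UNIV :: 'a set)) n"
    and "field_embedding emb"
    and "prim_root n \<theta>"
  shows "(\<exists>C. cyclic_code n C \<and> iso_self_dual emb \<theta> n C) \<longleftrightarrow>
         (0 < multiplicity (2::nat) n \<and>
          multiplicity (2::nat) n < 2 * multiplicity (2::nat) (card (UNIV :: 'a set) - 1))"
proof -
  interpret iso emb \<theta> n using assms by unfold_locales
  let ?q = "card (UNIV :: 'a set)"
  show ?thesis
  proof
    assume "\<exists>C. cyclic_code n C \<and> iso_self_dual emb \<theta> n C"
    then obtain C s s' t where C: "cyclic_code n C"
      and st: "s < n" "coprime s n" "s' > 0" "[s * s' = 1] (mod n)" "t < n"
        "[?q * t = t] (mod n)" "phi emb \<theta> n s' t ` C = dual_code n C"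
      by (auto simp: iso_self_dual_def)
    define Z where "Z = {k. k < n \<and> (\<forall>a\<in>C. E a k = 0)}"
    have Zq: "\<forall>k\<in>Z. (?q * k) mod n \<in> Z"
      using forward_Z(1)[OF C st(5,6) st(7)] unfolding Z_def by blast
    have H: "\<forall>j<n. ((j * s' + (n - t)) mod n \<in> Z \<longleftrightarrow> (n - j) mod n \<notin> Z)"
      using forward_Z(2)[OF C st(5,6) st(7)] unfolding Z_def by blast
    have Zsub: "Z \<subseteq> {..<n}" by (auto simp: Z_def)
    define a where "a = multiplicity (2::nat) n"
    define b where "b = multiplicity (2::nat) (?q - 1)"
    have "0 < a \<and> a < 2 * b"
    proof (rule ccontr)
      assume nc: "\<not> (0 < a \<and> a < 2 * b)"
      have n0: "n \<noteq> 0" using n_pos by simp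
      obtain m where nm: "n = 2 ^ a * m" "\<not> 2 dvd m"
        using multiplicity_decompose'[OF n0, of 2] a_def by auto
      have "coprime (s * s') n" using cong_imp_coprime[OF cong_sym[OF st(4)]] by simp
      hence cu: "coprime s' n" by simp
      obtain i y0 where iy: "i \<le> 1" "[(?q ^ i + s') * y0 + t = 0] (mod 2 ^ a)"
      proof (cases "a = 0")
        case True thus ?thesis using that[of 0 0] by simp
      next
        case False
        hence a1: "a \<ge> 1" by simp
        have ab: "2 * b \<le> a" using nc a1 by simp
        have "2 dvd (2::nat) ^ a" using a1 by (simp add: dvd_power)
        hence n2: "2 dvd n" using nm(1) by simp
        have qodd: "odd ?q"
        proof
          assume "even ?q"
          hence "is_unit (2::nat)" using cop n2 by (meson coprime_common_divisor)
          thus False by simp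
        qed
        have "[s * s' = 1] (mod 2)" using cong_dvd_modulus_nat[OF st(4) n2] .
        hence "(s * s') mod 2 = 1" by (simp add: cong_def)
        hence "odd (s * s')" by (simp only: odd_iff_mod_2_eq_one)
        hence uodd: "odd s'" by simp
        have "t \<le> ?q * t" using q_ge2 by simp
        hence "n dvd ?q * t - t" using st(6) cong_altdef_nat by blast
        moreover have "?q * t - t = (?q - 1) * t" by (simp add: diff_mult_distrib)
        ultimately have "n dvd (?q - 1) * t" by simp
        hence dv: "2 ^ a dvd (?q - 1) * t" using nm(1) by (metis dvd_mult_left)
        obtain i y0 where "i \<le> 1" "[(?q ^ i + s') * y0 + t = 0] (mod 2 ^ a)"
          using two_adic[OF a1 ab qodd q_ge2 b_def uodd dv] by blast
        thus ?thesis using that by blast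
      qed
      show False
        by (rule count_contra[OF nm(1) _ _ cop cu Zsub Zq st(5) H iy]) (use nm in auto)
    qed
    thus "0 < multiplicity (2::nat) n \<and> multiplicity (2::nat) n < 2 * multiplicity (2::nat) (?q - 1)"
      by (simp add: a_def b_def)
  next
    assume "0 < multiplicity (2::nat) n \<and> multiplicity (2::nat) n < 2 * multiplicity (2::nat) (?q - 1)"
    thus "\<exists>C. cyclic_code n C \<and> iso_self_dual emb \<theta> n C" using backward by blast
  qed
qed

end
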